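(* Consider the following recursive procedure on input $(T,C,w)$, where $T=(V,E)$ is a tree, $w:V\to\mathbb R_{\ge0}$, and $C$ is a partial coloring with domain $\mathrm{support}(w)=\{v:w(v)>0\}$: if $V\setminus\mathrm{support}(w)$ is a cover of $(T,C)$, return $X=V\setminus\mathrm{support}(w)$; otherwise choose two pairs of (not necessarily distinct) vertices $(x_1,x_2)$, $(y_1,y_2)$ in $\mathrm{support}(w)$ with $C(x_1)=C(x_2)\neq C(y_1)=C(y_2)$ and $\mathrm{carrier}(\{x_1,x_2\})\cap\mathrm{carrier}(\{y_1,y_2\})\neq\emptyset$, let $\varepsilon=\min\{w(x_1),w(x_2),w(y_1),w(y_2)\}$, let $w_1=w-\varepsilon\cdot\mathbf 1_{\{x_1,x_2,y_1,y_2\}}$, and return the output of the procedure on $(T,C|_{\mathrm{support}(w_1)},w_1)$. Then the procedure is well defined (whenever $V\setminus\mathrm{support}(w)$ is not a cover, such pairs exist), terminates, and returns a cover $X$ of $(T,C)$ with $w(X)\le 4\,\mathrm{OPT}(T,C,w)$.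
   Context: For $U\subseteq V$, $\mathrm{carrier}(U)$ is the minimal connected subtree of $T$ containing $U$. A partial coloring of a tree is convex if it can be extended to a total coloring in which every color class induces a connected subtree. A set $X\subseteq V$ is a cover of $(T,C)$ if the restriction of $C$ to $\mathrm{Domain}(C)\setminus X$ is convex. $w(X)=\sum_{v\in X}w(v)$, and $\mathrm{OPT}(T,C,w)$ is the minimum of $w(X)$ over all covers $X$. *)

theory Defs
  imports Complex_Main
begin

definition induced_rel :: "'v set set \<Rightarrow> 'v set \<Rightarrow> ('v \<times> 'v) set" where
  "induced_rel E S = {(a, b). {a, b} \<in> E \<and> a \<in> S \<and> b \<in> S}"

text \<open>S induces a connected subgraph (the empty set counts as connected).\<close>
definition connected_in :: "'v set set \<Rightarrow> 'v set \<Rightarrow> bool" where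
  "connected_in E S \<longleftrightarrow> (\<forall>u\<in>S. \<forall>v\<in>S. (u, v) \<in> (induced_rel E S)\<^sup>*)"

definition is_tree :: "'v set \<Rightarrow> 'v set set \<Rightarrow> bool" where
  "is_tree V E \<longleftrightarrow> finite V \<and> V \<noteq> {} \<and> (\<forall>e\<in>E. e \<subseteq> V \<and> card e = 2)
     \<and> connected_in E V \<and> card E = card V - 1"

definition carrier :: "'v set \<Rightarrow> 'v set set \<Rightarrow> 'v set \<Rightarrow> 'v set" where
  "carrier V E U = \<Inter>{S. U \<subseteq> S \<and> S \<subseteq> V \<and> connected_in E S}"

text \<open>Partial colorings are maps 'v => 'c option; the domain is {v. C v ~= None}.\<close>
definition convex :: "'v set \<Rightarrow> 'v set set \<Rightarrow> ('v \<Rightarrow> 'c option) \<Rightarrow> bool" where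
  "convex V E C \<longleftrightarrow> (\<exists>f :: 'v \<Rightarrow> 'c. (\<forall>v\<in>V. \<forall>c. C v = Some c \<longrightarrow> f v = c)
      \<and> (\<forall>c. connected_in E {v\<in>V. f v = c}))"

definition restrict_col :: "('v \<Rightarrow> 'c option) \<Rightarrow> 'v set \<Rightarrow> 'v \<Rightarrow> 'c option" where
  "restrict_col C S = (\<lambda>v. if v \<in> S then C v else None)"

definition is_cover :: "'v set \<Rightarrow> 'v set set \<Rightarrow> ('v \<Rightarrow> 'c option) \<Rightarrow> 'v set \<Rightarrow> bool" where
  "is_cover V E C X \<longleftrightarrow> X \<subseteq> V \<and> convex V E (restrict_col C ({v. C v \<noteq> None} - X))"

definition OPT :: "'v set \<Rightarrow> 'v set set \<Rightarrow> ('v \<Rightarrow> 'c option) \<Rightarrow> ('v \<Rightarrow> real) \<Rightarrow> real" where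
  "OPT V E C w = Min {sum w X | X. is_cover V E C X}"

definition supp :: "'v set \<Rightarrow> ('v \<Rightarrow> real) \<Rightarrow> 'v set" where
  "supp V w = {v\<in>V. w v > 0}"

definition valid_choice :: "'v set \<Rightarrow> 'v set set \<Rightarrow> ('v \<Rightarrow> 'c option) \<Rightarrow> ('v \<Rightarrow> real)
    \<Rightarrow> 'v \<Rightarrow> 'v \<Rightarrow> 'v \<Rightarrow> 'v \<Rightarrow> bool" where
  "valid_choice V E C w x1 x2 y1 y2 \<longleftrightarrow>
     {x1, x2, y1, y2} \<subseteq> supp V w \<and> C x1 = C x2 \<and> C y1 = C y2 \<and> C x1 \<noteq> C y1
     \<and> carrier V E {x1, x2} \<inter> carrier V E {y1, y2} \<noteq> {}"

definition new_weight :: "('v \<Rightarrow> real) \<Rightarrow> 'v \<Rightarrow> 'v \<Rightarrow> 'v \<Rightarrow> 'v \<Rightarrow> 'v \<Rightarrow> real" where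
  "new_weight w x1 x2 y1 y2 =
     (let \<epsilon> = Min {w x1, w x2, w y1, w y2}
      in (\<lambda>v. if v \<in> {x1, x2, y1, y2} then w v - \<epsilon> else w v))"

definition proc_step :: "'v set \<Rightarrow> 'v set set \<Rightarrow> ('v \<Rightarrow> 'c option) \<times> ('v \<Rightarrow> real)
    \<Rightarrow> ('v \<Rightarrow> 'c option) \<times> ('v \<Rightarrow> real) \<Rightarrow> bool" where
  "proc_step V E s s' \<longleftrightarrow> (let (C, w) = s; (C', w') = s' in
     \<not> is_cover V E C (V - supp V w) \<and>
     (\<exists>x1 x2 y1 y2. valid_choice V E C w x1 x2 y1 y2
        \<and> w' = new_weight w x1 x2 y1 y2 \<and> C' = restrict_col C (supp V w')))"

text \<open>proc_out V E C w X: X is a possible output of the (nondeterministic) procedure.\<close>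
inductive proc_out :: "'v set \<Rightarrow> 'v set set \<Rightarrow> ('v \<Rightarrow> 'c option) \<Rightarrow> ('v \<Rightarrow> real) \<Rightarrow> 'v set \<Rightarrow> bool"
  for V E where
  stop: "is_cover V E C (V - supp V w) \<Longrightarrow> proc_out V E C w (V - supp V w)"
| rec: "proc_step V E (C, w) (C', w') \<Longrightarrow> proc_out V E C' w' X \<Longrightarrow> proc_out V E C w X"

end

theory Submission
  imports Defs
begin


lemma conn_sub_single: "S \<subseteq> {x} \<Longrightarrow> connected_in E S"
  unfolding connected_in_def by auto

lemma conn_mono_E:
  assumes "E \<subseteq> E'" "connected_in E S" shows "connected_in E' S"
  unfolding connected_in_def
proof (intro ballI)
  fix u v assume "u \<in> S" "v \<in> S"
  then have "(u, v) \<in> (induced_rel E S)\<^sup>*" using assms(2) unfolding connected_in_def by blast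
  moreover have "induced_rel E S \<subseteq> induced_rel E' S" using assms(1) unfolding induced_rel_def by auto
  ultimately show "(u, v) \<in> (induced_rel E' S)\<^sup>*" using rtrancl_mono by blast
qed

lemma conn_add_vertex:
  assumes "connected_in E S" "n \<in> S" "{l, n} \<in> E"
  shows "connected_in E (insert l S)"
proof -
  let ?R = "induced_rel E (insert l S)"
  have sub: "(induced_rel E S)\<^sup>* \<subseteq> ?R\<^sup>*" by (rule rtrancl_mono) (auto simp: induced_rel_def)
  have ln: "(l, n) \<in> ?R" using assms(2,3) by (auto simp: induced_rel_def)
  have nl: "(n, l) \<in> ?R" using assms(2,3) by (auto simp: induced_rel_def insert_commute)
  have S: "\<forall>u\<in>S. \<forall>v\<in>S. (u, v) \<in> ?R\<^sup>*" using assms(1) sub unfolding connected_in_def by blast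
  show ?thesis unfolding connected_in_def
  proof (intro ballI)
    fix u v assume u: "u \<in> insert l S" and v: "v \<in> insert l S"
    have a: "(u, n) \<in> ?R\<^sup>*" using u S assms(2) ln by (auto intro: r_into_rtrancl)
    have b: "(n, v) \<in> ?R\<^sup>*" using v S assms(2) nl by (auto intro: r_into_rtrancl)
    show "(u, v) \<in> ?R\<^sup>*" using a b by (rule rtrancl_trans)
  qed
qed

definition leafc :: "'v set set \<Rightarrow> 'v \<Rightarrow> 'v \<Rightarrow> bool" where
  "leafc E l n \<longleftrightarrow> l \<noteq> n \<and> {l, n} \<in> E \<and> (\<forall>e\<in>E. l \<in> e \<longrightarrow> e = {l, n})"

lemma leaf_nb: "leafc E l n \<Longrightarrow> {l, m} \<in> E \<Longrightarrow> m = n"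
  unfolding leafc_def by (metis doubleton_eq_iff insertI1)

lemma leaf_path:
  assumes "leafc E l n" "(u, v) \<in> (induced_rel E S)\<^sup>*" "u \<noteq> l"
  shows "(v \<noteq> l \<longrightarrow> (u, v) \<in> (induced_rel E (S - {l}))\<^sup>*) \<and> (v = l \<longrightarrow> (u, n) \<in> (induced_rel E (S - {l}))\<^sup>*)"
  using assms(2)
proof (induction rule: rtrancl_induct)
  case base then show ?case using assms(3) by simp
next
  case (step y z)
  from step.hyps(2) have yz: "{y, z} \<in> E" "y \<in> S" "z \<in> S" by (auto simp: induced_rel_def)
  show ?case
  proof (cases "z = l")
    case True
    then have "y = n" using leaf_nb[OF assms(1)] yz(1) by (metis insert_commute)
    then show ?thesis using step.IH True assms(1) by (auto simp: leafc_def)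
  next
    case False
    show ?thesis
    proof (cases "y = l")
      case True
      then have "z = n" using leaf_nb[OF assms(1)] yz(1) by simp
      then show ?thesis using step.IH True False by auto
    next
      case False2: False
      have "(y, z) \<in> induced_rel E (S - {l})" using yz False False2 by (auto simp: induced_rel_def)
      then show ?thesis using step.IH False False2 by (auto intro: rtrancl_into_rtrancl)
    qed
  qed
qed

lemma leaf_remove_conn:
  assumes "leafc E l n" "connected_in E S" shows "connected_in E (S - {l})"
  unfolding connected_in_def
proof (intro ballI)
  fix u v assume "u \<in> S - {l}" "v \<in> S - {l}"
  then have "(u, v) \<in> (induced_rel E S)\<^sup>*" "u \<noteq> l" "v \<noteq> l" using assms(2) unfolding connected_in_def by auto
  then show "(u, v) \<in> (induced_rel E (S - {l}))\<^sup>*" using leaf_path[OF assms(1)] by blast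
qed

lemma leaf_first:
  assumes "leafc E l n" "connected_in E S" "l \<in> S" "x \<in> S" "x \<noteq> l"
  shows "n \<in> S"
proof -
  have "(l, x) \<in> (induced_rel E S)\<^sup>*" using assms(2-4) unfolding connected_in_def by blast
  then show ?thesis
  proof (rule converse_rtranclE)
    assume "l = x" then show ?thesis using assms(5) by simp
  next
    fix m assume "(l, m) \<in> induced_rel E S"
    then have "{l, m} \<in> E" "m \<in> S" by (auto simp: induced_rel_def)
    then show ?thesis using leaf_nb[OF assms(1)] by blast
  qed
qed

lemma induced_rel_E': "l \<notin> T \<Longrightarrow> induced_rel (E - {{l, n}}) T = induced_rel E T"
  unfolding induced_rel_def by (auto simp: doubleton_eq_iff)

lemma conn_E': "l \<notin> T \<Longrightarrow> connected_in (E - {{l, n}}) T = connected_in E T"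
  by (simp add: connected_in_def induced_rel_E')

lemma carrier_sub: "U \<subseteq> S \<Longrightarrow> S \<subseteq> V \<Longrightarrow> connected_in E S \<Longrightarrow> carrier V E U \<subseteq> S"
  unfolding carrier_def by blast

lemma carrier_single: "x \<in> V \<Longrightarrow> carrier V E {x} = {x}"
proof
  assume "x \<in> V" then show "carrier V E {x} \<subseteq> {x}" by (intro carrier_sub conn_sub_single) auto
next
  show "{x} \<subseteq> carrier V E {x}" unfolding carrier_def by blast
qed

lemma carrier_C1:
  assumes "leafc E l n" "U \<subseteq> V - {l}"
  shows "carrier (V - {l}) (E - {{l, n}}) U \<subseteq> carrier V E U"
  unfolding carrier_def[of V E U]
proof (rule Inter_greatest)
  fix S assume "S \<in> {S. U \<subseteq> S \<and> S \<subseteq> V \<and> connected_in E S}"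
  then have "U \<subseteq> S - {l}" "S - {l} \<subseteq> V - {l}" using assms by auto
  moreover have "connected_in (E - {{l, n}}) (S - {l})"
    using \<open>S \<in> _\<close> by (simp add: conn_E' leaf_remove_conn[OF assms(1)])
  ultimately have "carrier (V - {l}) (E - {{l, n}}) U \<subseteq> S - {l}" by (rule carrier_sub)
  then show "carrier (V - {l}) (E - {{l, n}}) U \<subseteq> S" by blast
qed

lemma carrier_C3:
  assumes "leafc E l n" "x \<noteq> l"
  shows "n \<in> carrier V E {l, x}"
  unfolding carrier_def using leaf_first[OF assms(1)] assms(2) by blast

lemma carrier_C2:
  assumes "leafc E l n" "x \<in> V - {l}" "n \<in> V"
  shows "carrier (V - {l}) (E - {{l, n}}) {n, x} \<subseteq> carrier V E {l, x}"
  unfolding carrier_def[of V E "{l, x}"]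
proof (rule Inter_greatest)
  fix S assume S: "S \<in> {S. {l, x} \<subseteq> S \<and> S \<subseteq> V \<and> connected_in E S}"
  then have "n \<in> S" using leaf_first[OF assms(1)] assms(2) by blast
  then have "{n, x} \<subseteq> S - {l}" "S - {l} \<subseteq> V - {l}" using S assms by (auto simp: leafc_def)
  moreover have "connected_in (E - {{l, n}}) (S - {l})"
    using S by (simp add: conn_E' leaf_remove_conn[OF assms(1)])
  ultimately have "carrier (V - {l}) (E - {{l, n}}) {n, x} \<subseteq> S - {l}" by (rule carrier_sub)
  then show "carrier (V - {l}) (E - {{l, n}}) {n, x} \<subseteq> S" by blast
qed



lemma deg_sum:
  assumes "finite V" "finite E" "\<forall>e\<in>E. e \<subseteq> V \<and> card e = 2"
  shows "(\<Sum>v\<in>V. card {e\<in>E. v \<in> e}) = 2 * card E"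
proof -
  have "(\<Sum>v\<in>V. card {e\<in>E. v \<in> e}) = (\<Sum>v\<in>V. \<Sum>e\<in>E. if v \<in> e then 1 else 0)"
    using assms(2) by (simp add: sum.inter_filter[symmetric])
  also have "\<dots> = (\<Sum>e\<in>E. \<Sum>v\<in>V. if v \<in> e then 1 else 0)" by (rule sum.swap)
  also have "\<dots> = (\<Sum>e\<in>E. card {v\<in>V. v \<in> e})"
    using assms(1) by (simp add: sum.inter_filter[symmetric])
  also have "\<dots> = (\<Sum>e\<in>E. 2)"
  proof (rule sum.cong)
    fix e assume "e \<in> E"
    then have "{v\<in>V. v \<in> e} = e" using assms(3) by auto
    then show "card {v\<in>V. v \<in> e} = 2" using assms(3) \<open>e \<in> E\<close> by simp
  qed simp
  finally show ?thesis by simp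
qed

lemma tree_finE: "is_tree V E \<Longrightarrow> finite E"
  unfolding is_tree_def by (intro finite_subset[of E "Pow V"]) auto

lemma tree_leaf:
  assumes T: "is_tree V E" and c: "card V \<ge> 2"
  shows "\<exists>l n. l \<in> V \<and> n \<in> V \<and> leafc E l n"
proof -
  have fV: "finite V" and eV: "\<forall>e\<in>E. e \<subseteq> V \<and> card e = 2" and cE: "card E = card V - 1"
    and conn: "connected_in E V" using T unfolding is_tree_def by auto
  have fE: "finite E" using tree_finE[OF T] .
  have ds: "(\<Sum>v\<in>V. card {e\<in>E. v \<in> e}) = 2 * card E" using deg_sum[OF fV fE eV] .
  have "\<exists>l\<in>V. card {e\<in>E. l \<in> e} < 2"
  proof (rule ccontr)
    assume "\<not> ?thesis"
    then have "\<forall>v\<in>V. 2 \<le> card {e\<in>E. v \<in> e}" by auto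
    then have "(\<Sum>v\<in>V. (2::nat)) \<le> (\<Sum>v\<in>V. card {e\<in>E. v \<in> e})" by (intro sum_mono) auto
    then have "2 * card V \<le> 2 * card E" using ds by simp
    then show False using cE c by linarith
  qed
  then obtain l where l: "l \<in> V" "card {e\<in>E. l \<in> e} < 2" by blast
  obtain u where u: "u \<in> V" "u \<noteq> l"
  proof -
    have "\<not> V \<subseteq> {l}"
    proof
      assume "V \<subseteq> {l}"
      then have "card V \<le> card {l}" by (intro card_mono) auto
      then show False using c by simp
    qed
    then show ?thesis using that by blast
  qed
  have "(l, u) \<in> (induced_rel E V)\<^sup>*" using conn l u unfolding connected_in_def by blast
  then obtain m where m: "(l, m) \<in> induced_rel E V"
    using u(2) by (cases rule: converse_rtranclE) auto
  then have lm: "{l, m} \<in> E" "m \<in> V" by (auto simp: induced_rel_def)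
  have fin: "finite {e\<in>E. l \<in> e}" using fE by simp
  have "{l, m} \<in> {e\<in>E. l \<in> e}" using lm by simp
  moreover have "card {e\<in>E. l \<in> e} \<le> Suc 0" using l(2) by simp
  ultimately have one: "{e\<in>E. l \<in> e} = {{l, m}}" using card_le_Suc0_iff_eq[OF fin] by auto
  have "card {l, m} = 2" using eV lm by auto
  then have lne: "l \<noteq> m" by auto
  have all: "\<forall>e\<in>E. l \<in> e \<longrightarrow> e = {l, m}"
  proof (intro ballI impI)
    fix e assume "e \<in> E" "l \<in> e"
    then have "e \<in> {e\<in>E. l \<in> e}" by simp
    then show "e = {l, m}" using one by (metis singletonD)
  qed
  have "leafc E l m" unfolding leafc_def using lne lm(1) all by (intro conjI)
  then show ?thesis using l lm by blast
qed

lemma tree_remove: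
  assumes T: "is_tree V E" and lf: "leafc E l n" and lV: "l \<in> V" and nV: "n \<in> V"
  shows "is_tree (V - {l}) (E - {{l, n}})"
proof -
  have fV: "finite V" and eV: "\<forall>e\<in>E. e \<subseteq> V \<and> card e = 2" and cE: "card E = card V - 1"
    and conn: "connected_in E V" using T unfolding is_tree_def by auto
  have fE: "finite E" using tree_finE[OF T] .
  have ln: "l \<noteq> n" "{l, n} \<in> E" and lf2: "\<forall>e\<in>E. l \<in> e \<longrightarrow> e = {l, n}" using lf unfolding leafc_def by auto
  have "\<forall>e\<in>E - {{l, n}}. e \<subseteq> V - {l} \<and> card e = 2" using eV lf2 by blast
  moreover have "connected_in (E - {{l, n}}) (V - {l})"
    using conn by (simp add: conn_E' leaf_remove_conn[OF lf])
  moreover have "card (E - {{l, n}}) = card (V - {l}) - 1"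
    using fE fV ln lV cE by (simp add: card_Diff_singleton)
  moreover have "V - {l} \<noteq> {}" using nV ln by auto
  ultimately show ?thesis using fV unfolding is_tree_def by auto
qed



definition disj :: "'v set \<Rightarrow> 'v set set \<Rightarrow> ('v \<Rightarrow> 'c option) \<Rightarrow> bool" where
  "disj V E C \<longleftrightarrow> (\<forall>x1 x2 y1 y2 a b. C x1 = Some a \<longrightarrow> C x2 = Some a \<longrightarrow> C y1 = Some b \<longrightarrow> C y2 = Some b
     \<longrightarrow> a \<noteq> b \<longrightarrow> carrier V E {x1, x2} \<inter> carrier V E {y1, y2} = {})"

definition good_ext :: "'v set \<Rightarrow> 'v set set \<Rightarrow> ('v \<Rightarrow> 'c option) \<Rightarrow> ('v \<Rightarrow> 'c) \<Rightarrow> bool" where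
  "good_ext V E C f \<longleftrightarrow> (\<forall>v\<in>V. \<forall>c. C v = Some c \<longrightarrow> f v = c) \<and> (\<forall>c. connected_in E {v\<in>V. f v = c})
     \<and> (\<forall>v\<in>V. (\<exists>u. C u = Some (f v)) \<or> (\<forall>u. C u = None))"

lemma disj_transfer:
  assumes "disj V E C"
    and "\<And>z1 z2 a. C' z1 = Some a \<Longrightarrow> C' z2 = Some a \<Longrightarrow>
          \<exists>u1 u2. C u1 = Some a \<and> C u2 = Some a \<and> carrier V' E' {z1, z2} \<subseteq> carrier V E {u1, u2}"
  shows "disj V' E' C'"
  unfolding disj_def
proof (intro allI impI)
  fix x1 x2 y1 y2 a b assume h: "C' x1 = Some a" "C' x2 = Some a" "C' y1 = Some b" "C' y2 = Some b" "a \<noteq> b"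
  obtain u1 u2 where u: "C u1 = Some a" "C u2 = Some a" "carrier V' E' {x1, x2} \<subseteq> carrier V E {u1, u2}"
    using assms(2)[OF h(1,2)] by blast
  obtain t1 t2 where t: "C t1 = Some b" "C t2 = Some b" "carrier V' E' {y1, y2} \<subseteq> carrier V E {t1, t2}"
    using assms(2)[OF h(3,4)] by blast
  have "carrier V E {u1, u2} \<inter> carrier V E {t1, t2} = {}"
    using assms(1)[unfolded disj_def, rule_format, of u1 a u2 t1 b t2] u t h(5) by blast
  then show "carrier V' E' {x1, x2} \<inter> carrier V' E' {y1, y2} = {}" using u(3) t(3) by blast
qed

lemma ge1: "good_ext V E C f \<Longrightarrow> v \<in> V \<Longrightarrow> C v = Some c \<Longrightarrow> f v = c"
  unfolding good_ext_def by blast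
lemma ge2: "good_ext V E C f \<Longrightarrow> connected_in E {v\<in>V. f v = c}"
  unfolding good_ext_def by blast
lemma ge2': "good_ext V E C f \<Longrightarrow> \<forall>c. connected_in E {v\<in>V. f v = c}"
  unfolding good_ext_def by blast
lemma ge3: "good_ext V E C f \<Longrightarrow> v \<in> V \<Longrightarrow> (\<exists>u. C u = Some (f v)) \<or> (\<forall>u. C u = None)"
  unfolding good_ext_def by blast



lemma key:
  "is_tree V E \<Longrightarrow> {v. C v \<noteq> None} \<subseteq> V \<Longrightarrow> disj V E C \<Longrightarrow> \<exists>f. good_ext V E C f"
proof (induction "card V" arbitrary: V E C rule: less_induct)
  case less
  note T = less.prems(1) and dom = less.prems(2) and D = less.prems(3)
  have fV: "finite V" "V \<noteq> {}" and connV: "connected_in E V" using T unfolding is_tree_def by auto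
  show ?case
  proof (cases "card V \<ge> 2")
    case False
    have "card V > 0" using fV by (simp add: card_gt_0_iff)
    then have "card V = 1" using False by linarith
    then obtain v where V: "V = {v}" by (rule card_1_singletonE)
    define f where "f = (\<lambda>_::'a. case C v of Some c \<Rightarrow> c | None \<Rightarrow> undefined)"
    have "good_ext V E C f" unfolding good_ext_def
    proof (intro conjI ballI allI impI)
      fix u c assume "u \<in> V" "C u = Some c" then show "f u = c" using V f_def by simp
    next
      fix c show "connected_in E {u\<in>V. f u = c}" by (rule conn_sub_single) (use V in auto)
    next
      fix u assume "u \<in> V"
      show "(\<exists>u'. C u' = Some (f u)) \<or> (\<forall>u'. C u' = None)"
      proof (cases "C v")
        case None
        then have "\<forall>u'. C u' = None" using dom V by auto
        then show ?thesis by simp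
      next
        case (Some c) then show ?thesis using f_def by auto
      qed
    qed
    then show ?thesis by blast
  next
    case True
    obtain l n where lV: "l \<in> V" and nV: "n \<in> V" and lf: "leafc E l n" using tree_leaf[OF T True] by blast
    have lnE: "l \<noteq> n" "{l, n} \<in> E" using lf unfolding leafc_def by auto
    define V' where "V' = V - {l}"
    define E' where "E' = E - {{l, n}}"
    have T': "is_tree V' E'" unfolding V'_def E'_def by (rule tree_remove[OF T lf lV nV])
    have lt: "card V' < card V" unfolding V'_def using fV lV by (simp add: card_gt_0_iff)
    have nV': "n \<in> V'" using nV lnE unfolding V'_def by auto
    have EE: "E' \<subseteq> E" unfolding E'_def by auto
    have conn_up: "\<And>S. connected_in E' S \<Longrightarrow> connected_in E S" using conn_mono_E[OF EE] .
    have C1: "\<And>U. U \<subseteq> V' \<Longrightarrow> carrier V' E' U \<subseteq> carrier V E U"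
      unfolding V'_def E'_def using carrier_C1[OF lf] by blast
    have C2: "\<And>x. x \<in> V' \<Longrightarrow> carrier V' E' {n, x} \<subseteq> carrier V E {l, x}"
      unfolding V'_def E'_def using carrier_C2[OF lf _ nV] by blast
    have C3: "\<And>x. x \<noteq> l \<Longrightarrow> n \<in> carrier V E {l, x}" using carrier_C3[OF lf] by blast
    have ext: "\<And>f' c. (\<forall>d. connected_in E' {v\<in>V'. f' v = d}) \<Longrightarrow> (f' n = c \<or> (\<forall>v\<in>V'. f' v \<noteq> c))
       \<Longrightarrow> \<forall>d. connected_in E {v\<in>V. (f'(l := c)) v = d}"
    proof (intro allI)
      fix f' c d assume h1: "\<forall>d. connected_in E' {v\<in>V'. f' v = d}" and h2: "f' n = c \<or> (\<forall>v\<in>V'. f' v \<noteq> c)"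
      show "connected_in E {v\<in>V. (f'(l := c)) v = d}"
      proof (cases "d = c")
        case True
        show ?thesis
        proof (cases "f' n = c")
          case True2: True
          have "{v\<in>V. (f'(l := c)) v = d} = insert l {v\<in>V'. f' v = c}" using True lV unfolding V'_def by auto
          moreover have "connected_in E (insert l {v\<in>V'. f' v = c})"
            using conn_add_vertex[OF conn_up[OF spec[OF h1, of c]] _ lnE(2)] True2 nV' by auto
          ultimately show ?thesis by simp
        next
          case False
          then have "{v\<in>V. (f'(l := c)) v = d} = {l}" using True h2 lV unfolding V'_def by auto
          then show ?thesis using conn_sub_single[of "{l}" l E] by simp
        qed
      next
        case False
        then have "{v\<in>V. (f'(l := c)) v = d} = {v\<in>V'. f' v = d}" unfolding V'_def by auto
        then show ?thesis using conn_up h1 by simp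
      qed
    qed
    show ?thesis
    proof (cases "C l")
      case None
      have dom': "{v. C v \<noteq> None} \<subseteq> V'" using dom None unfolding V'_def by auto
      have D': "disj V' E' C"
      proof (rule disj_transfer[OF D])
        fix z1 z2 a assume z: "C z1 = Some a" "C z2 = Some a"
        then have "{z1, z2} \<subseteq> V'" using dom' by auto
        then show "\<exists>u1 u2. C u1 = Some a \<and> C u2 = Some a \<and> carrier V' E' {z1, z2} \<subseteq> carrier V E {u1, u2}"
          using C1[OF \<open>{z1, z2} \<subseteq> V'\<close>] z by blast
      qed
      obtain f' where f': "good_ext V' E' C f'" using less.hyps[OF lt T' dom' D'] by blast
      define f where "f = f'(l := f' n)"
      have "good_ext V E C f" unfolding good_ext_def
      proof (intro conjI ballI allI impI)
        fix v c assume vc: "v \<in> V" "C v = Some c"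
        then have "v \<in> V'" "v \<noteq> l" using None dom' by auto
        then show "f v = c" using ge1[OF f' _ vc(2)] unfolding f_def by simp
      next
        fix d show "connected_in E {v\<in>V. f v = d}" using ext[of f' "f' n", OF ge2'[OF f']] unfolding f_def by simp
      next
        fix v assume "v \<in> V"
        have fv: "f v = f' (if v = l then n else v)" and ifV: "(if v = l then n else v) \<in> V'"
          using \<open>v \<in> V\<close> nV' unfolding f_def V'_def by auto
        then show "(\<exists>u. C u = Some (f v)) \<or> (\<forall>u. C u = None)" using ge3[OF f' ifV] fv by simp
      qed
      then show ?thesis by blast
    next
      case (Some c)
      show ?thesis
      proof (cases "\<exists>x. x \<noteq> l \<and> C x = Some c")
        case True
        then obtain x where x: "x \<noteq> l" "C x = Some c" by blast
        have Cn: "C n = None \<or> C n = Some c"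
        proof (rule ccontr)
          assume "\<not> ?thesis"
          then obtain d where d: "C n = Some d" "d \<noteq> c" by auto
          have "n \<in> carrier V E {l, x}" using C3 x(1) .
          moreover have "carrier V E {n, n} = {n}" using carrier_single nV by simp
          ultimately have "carrier V E {l, x} \<inter> carrier V E {n, n} \<noteq> {}" by auto
          moreover have "carrier V E {l, x} \<inter> carrier V E {n, n} = {}"
            using D[unfolded disj_def, rule_format, of l c x n d n] Some x(2) d by auto
          ultimately show False by simp
        qed
        define C' where "C' = (C(l := None))(n := Some c)"
        have dom': "{v. C' v \<noteq> None} \<subseteq> V'" using dom nV' unfolding C'_def V'_def by auto
        have D': "disj V' E' C'"
        proof (rule disj_transfer[OF D])
          fix z1 z2 a assume z: "C' z1 = Some a" "C' z2 = Some a"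
          have zV: "z1 \<in> V'" "z2 \<in> V'" using z dom' by auto
          have zl: "z1 \<noteq> l" "z2 \<noteq> l" using zV unfolding V'_def by auto
          show "\<exists>u1 u2. C u1 = Some a \<and> C u2 = Some a \<and> carrier V' E' {z1, z2} \<subseteq> carrier V E {u1, u2}"
          proof (cases "z1 = n")
            case z1n: True
            then have a: "a = c" using z unfolding C'_def by simp
            show ?thesis
            proof (cases "z2 = n")
              case True
              then have "carrier V' E' {z1, z2} = {n}" using z1n carrier_single nV' by simp
              then have "carrier V' E' {z1, z2} \<subseteq> carrier V E {l, x}" using C3 x(1) by simp
              then show ?thesis using Some x(2) a by blast
            next
              case False
              then have "C z2 = Some a" using z zl unfolding C'_def by simp
              then show ?thesis using C2[OF zV(2)] z1n Some a by blast
            qed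
          next
            case z1n: False
            then have Cz1: "C z1 = Some a" using z zl unfolding C'_def by simp
            show ?thesis
            proof (cases "z2 = n")
              case True
              then have a: "a = c" using z unfolding C'_def by simp
              have "carrier V' E' {z1, z2} \<subseteq> carrier V E {l, z1}" using C2[OF zV(1)] True by (simp add: insert_commute)
              then show ?thesis using Some Cz1 a by blast
            next
              case False
              then have "C z2 = Some a" using z zl unfolding C'_def by simp
              moreover have "{z1, z2} \<subseteq> V'" using zV by auto
              ultimately show ?thesis using C1 Cz1 by blast
            qed
          qed
        qed
        obtain f' where f': "good_ext V' E' C' f'" using less.hyps[OF lt T' dom' D'] by blast
        have f'n: "f' n = c" using f' nV' unfolding good_ext_def C'_def by auto
        define f where "f = f'(l := c)"
        have "good_ext V E C f" unfolding good_ext_def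
        proof (intro conjI ballI allI impI)
          fix v d assume v: "v \<in> V" "C v = Some d"
          show "f v = d"
          proof (cases "v = l")
            case True then show ?thesis using v Some unfolding f_def by simp
          next
            case False
            then have vV': "v \<in> V'" using v unfolding V'_def by auto
            show ?thesis
            proof (cases "v = n")
              case True then show ?thesis using Cn v f'n False unfolding f_def by auto
            next
              case False2: False
              then have "C' v = Some d" using v False unfolding C'_def by simp
              then show ?thesis using f' vV' False unfolding f_def good_ext_def by auto
            qed
          qed
        next
          fix d show "connected_in E {v\<in>V. f v = d}" using ext[of f' c] f' f'n unfolding f_def good_ext_def by blast
        next
          fix v assume "v \<in> V"
          show "(\<exists>u. C u = Some (f v)) \<or> (\<forall>u. C u = None)"
          proof (cases "v = l")
            case True then show ?thesis using Some unfolding f_def by auto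
          next
            case False
            then have "v \<in> V'" using \<open>v \<in> V\<close> unfolding V'_def by auto
            then have "(\<exists>u. C' u = Some (f' v)) \<or> (\<forall>u. C' u = None)" using f' unfolding good_ext_def by blast
            moreover have "\<not> (\<forall>u. C' u = None)" unfolding C'_def by auto
            ultimately obtain u where u: "C' u = Some (f' v)" by blast
            have "\<exists>u'. C u' = Some (f' v)"
            proof (cases "u = n")
              case True then show ?thesis using u Some unfolding C'_def by auto
            next
              case False
              then have "u \<noteq> l" using u lnE unfolding C'_def by auto
              then show ?thesis using u False unfolding C'_def by auto
            qed
            then show ?thesis using False unfolding f_def by auto
          qed
        qed
        then show ?thesis by blast
      next
        case False
        then have only: "\<forall>x. C x = Some c \<longrightarrow> x = l" by auto
        define C' where "C' = C(l := None)"
        have dom': "{v. C' v \<noteq> None} \<subseteq> V'" using dom unfolding C'_def V'_def by auto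
        have D': "disj V' E' C'"
        proof (rule disj_transfer[OF D])
          fix z1 z2 a assume z: "C' z1 = Some a" "C' z2 = Some a"
          then have "{z1, z2} \<subseteq> V'" "C z1 = Some a" "C z2 = Some a" using dom' unfolding C'_def by (auto split: if_splits)
          then show "\<exists>u1 u2. C u1 = Some a \<and> C u2 = Some a \<and> carrier V' E' {z1, z2} \<subseteq> carrier V E {u1, u2}"
            using C1 by blast
        qed
        obtain f' where f': "good_ext V' E' C' f'" using less.hyps[OF lt T' dom' D'] by blast
        show ?thesis
        proof (cases "\<forall>u. C' u = None")
          case True
          define f where "f = (\<lambda>_::'a. c)"
          have "good_ext V E C f" unfolding good_ext_def
          proof (intro conjI ballI allI impI)
            fix v d assume "v \<in> V" "C v = Some d"
            then have "v = l" using True unfolding C'_def by (auto split: if_splits)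
            then show "f v = d" using Some \<open>C v = Some d\<close> unfolding f_def by simp
          next
            fix d
            show "connected_in E {v\<in>V. f v = d}"
            proof (cases "d = c")
              case True then show ?thesis using connV unfolding f_def by simp
            next
              case False then show ?thesis unfolding f_def by (simp add: connected_in_def)
            qed
          next
            fix v assume "v \<in> V" show "(\<exists>u. C u = Some (f v)) \<or> (\<forall>u. C u = None)" using Some unfolding f_def by auto
          qed
          then show ?thesis by blast
        next
          case False
          have nc: "\<forall>v\<in>V'. f' v \<noteq> c"
          proof
            fix v assume "v \<in> V'"
            then have "\<exists>u. C' u = Some (f' v)" using f' False unfolding good_ext_def by blast
            then obtain u where "C' u = Some (f' v)" by blast
            then have "u \<noteq> l" "C u = Some (f' v)" unfolding C'_def by (auto split: if_splits)
            then show "f' v \<noteq> c" using only by auto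
          qed
          define f where "f = f'(l := c)"
          have "good_ext V E C f" unfolding good_ext_def
          proof (intro conjI ballI allI impI)
            fix v d assume v: "v \<in> V" "C v = Some d"
            show "f v = d"
            proof (cases "v = l")
              case True then show ?thesis using v Some unfolding f_def by simp
            next
              case False
              then have "v \<in> V'" "C' v = Some d" using v unfolding V'_def C'_def by auto
              then show ?thesis using f' False unfolding f_def good_ext_def by auto
            qed
          next
            fix d show "connected_in E {v\<in>V. f v = d}" using ext[of f' c] f' nc unfolding f_def good_ext_def by blast
          next
            fix v assume "v \<in> V"
            show "(\<exists>u. C u = Some (f v)) \<or> (\<forall>u. C u = None)"
            proof (cases "v = l")
              case True then show ?thesis using Some unfolding f_def by auto
            next
              case False
              then have "v \<in> V'" using \<open>v \<in> V\<close> unfolding V'_def by auto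
              then obtain u where "C' u = Some (f' v)" using f' \<open>\<not> (\<forall>u. C' u = None)\<close> unfolding good_ext_def by blast
              then have "C u = Some (f' v)" unfolding C'_def by (auto split: if_splits)
              then show ?thesis using False unfolding f_def by auto
            qed
          qed
          then show ?thesis by blast
        qed
      qed
    qed
  qed
qed



lemma dom_supp_restrict:
  assumes "\<forall>v. C v \<noteq> None \<longleftrightarrow> v \<in> supp V w"
  shows "restrict_col C ({v. C v \<noteq> None} - (V - supp V w)) = C"
proof
  fix v show "restrict_col C ({v. C v \<noteq> None} - (V - supp V w)) v = C v"
    using assms unfolding restrict_col_def supp_def by auto
qed

lemma convex_of_good: "good_ext V E C f \<Longrightarrow> convex V E C"
  unfolding convex_def good_ext_def by blast

lemma part1:
  assumes T: "is_tree V E" and dom: "\<forall>v. C v \<noteq> None \<longleftrightarrow> v \<in> supp V w"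
    and nc: "\<not> is_cover V E C (V - supp V w)"
  shows "\<exists>x1 x2 y1 y2. valid_choice V E C w x1 x2 y1 y2"
proof -
  have "\<not> convex V E C" using nc dom_supp_restrict[OF dom] unfolding is_cover_def by auto
  moreover have "{v. C v \<noteq> None} \<subseteq> V" using dom by (auto simp: supp_def)
  ultimately have "\<not> disj V E C" using key[OF T] convex_of_good by blast
  then obtain x1 x2 y1 y2 a b where h: "C x1 = Some a" "C x2 = Some a" "C y1 = Some b" "C y2 = Some b" "a \<noteq> b"
    "carrier V E {x1, x2} \<inter> carrier V E {y1, y2} \<noteq> {}" unfolding disj_def by blast
  have "x1 \<in> supp V w" "x2 \<in> supp V w" "y1 \<in> supp V w" "y2 \<in> supp V w"
    using dom h(1-4) by (metis option.distinct(1))+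
  then have "valid_choice V E C w x1 x2 y1 y2" unfolding valid_choice_def using h by auto
  then show ?thesis by blast
qed

lemma step_facts:
  assumes "valid_choice V E C w x1 x2 y1 y2"
  obtains \<epsilon> where "\<epsilon> > 0"
    "new_weight w x1 x2 y1 y2 = (\<lambda>v. if v \<in> {x1, x2, y1, y2} then w v - \<epsilon> else w v)"
    "\<forall>v\<in>{x1, x2, y1, y2}. \<epsilon> \<le> w v" "\<exists>z\<in>{x1, x2, y1, y2}. w z = \<epsilon>" "{x1, x2, y1, y2} \<subseteq> supp V w"
proof -
  let ?A = "{w x1, w x2, w y1, w y2}"
  define \<epsilon> where "\<epsilon> = Min ?A"
  have S: "{x1, x2, y1, y2} \<subseteq> supp V w" using assms unfolding valid_choice_def by simp
  have fA: "finite ?A" "?A \<noteq> {}" by auto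
  have "\<forall>a\<in>?A. 0 < a" using S unfolding supp_def by auto
  then have "0 < \<epsilon>" unfolding \<epsilon>_def using Min_gr_iff[OF fA] by blast
  moreover have "new_weight w x1 x2 y1 y2 = (\<lambda>v. if v \<in> {x1, x2, y1, y2} then w v - \<epsilon> else w v)"
    unfolding new_weight_def \<epsilon>_def Let_def by simp
  moreover have "\<forall>v\<in>{x1, x2, y1, y2}. \<epsilon> \<le> w v" unfolding \<epsilon>_def using Min_le[OF fA(1)] by auto
  moreover have "\<epsilon> \<in> ?A" unfolding \<epsilon>_def by (rule Min_in[OF fA])
  then have "\<exists>z\<in>{x1, x2, y1, y2}. w z = \<epsilon>" by auto
  ultimately show ?thesis using that S by blast
qed

lemma supp_decr:
  assumes "valid_choice V E C w x1 x2 y1 y2"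
  shows "supp V (new_weight w x1 x2 y1 y2) \<subset> supp V w"
proof -
  obtain \<epsilon> where e: "\<epsilon> > 0"
    "new_weight w x1 x2 y1 y2 = (\<lambda>v. if v \<in> {x1, x2, y1, y2} then w v - \<epsilon> else w v)"
    "\<forall>v\<in>{x1, x2, y1, y2}. \<epsilon> \<le> w v" "\<exists>z\<in>{x1, x2, y1, y2}. w z = \<epsilon>" "{x1, x2, y1, y2} \<subseteq> supp V w"
    using step_facts[OF assms] by blast
  have sub: "supp V (new_weight w x1 x2 y1 y2) \<subseteq> supp V w"
    unfolding supp_def e(2) using e(1) by (auto split: if_splits)
  obtain z where z: "z \<in> {x1, x2, y1, y2}" "w z = \<epsilon>" using e(4) by blast
  have "z \<in> supp V w" using z e(5) by blast
  moreover have "z \<notin> supp V (new_weight w x1 x2 y1 y2)" unfolding supp_def e(2) using z by auto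
  ultimately show ?thesis using sub by blast
qed

lemma proc_step_simp:
  "proc_step V E (C, w) (C', w') \<longleftrightarrow> \<not> is_cover V E C (V - supp V w) \<and>
     (\<exists>x1 x2 y1 y2. valid_choice V E C w x1 x2 y1 y2
        \<and> w' = new_weight w x1 x2 y1 y2 \<and> C' = restrict_col C (supp V w'))"
  by (simp add: proc_step_def)

lemma step_card:
  assumes "finite V" "proc_step V E s s'"
  shows "card (supp V (snd s')) < card (supp V (snd s))"
proof -
  obtain C w where s: "s = (C, w)" by (cases s)
  obtain C' w' where s': "s' = (C', w')" by (cases s')
  obtain x1 x2 y1 y2 where vc: "valid_choice V E C w x1 x2 y1 y2" and w': "w' = new_weight w x1 x2 y1 y2"
    using assms(2) unfolding s s' proc_step_simp by blast
  have "supp V w' \<subset> supp V w" unfolding w' by (rule supp_decr[OF vc])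
  moreover have "finite (supp V w)" using assms(1) unfolding supp_def by simp
  ultimately show ?thesis unfolding s s' by (simp add: psubset_card_mono)
qed

lemma no_inf:
  assumes "finite V"
  shows "\<not> (\<exists>f. f 0 = s \<and> (\<forall>n. proc_step V E (f n) (f (Suc n))))"
proof
  assume "\<exists>f. f 0 = s \<and> (\<forall>n. proc_step V E (f n) (f (Suc n)))"
  then obtain f where f0: "f 0 = s" and f: "\<forall>n. proc_step V E (f n) (f (Suc n))" by blast
  have "card (supp V (snd (f n))) + n \<le> card (supp V (snd (f 0)))" for n
  proof (induction n)
    case 0 then show ?case by simp
  next
    case (Suc n)
    have "card (supp V (snd (f (Suc n)))) < card (supp V (snd (f n)))" using step_card[OF assms] f by blast
    then show ?case using Suc by simp
  qed
  from this[of "Suc (card (supp V (snd (f 0))))"] show False by simp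
qed

lemma exists_out:
  "is_tree V E \<Longrightarrow> \<forall>v. C v \<noteq> None \<longleftrightarrow> v \<in> supp V w \<Longrightarrow> \<exists>X. proc_out V E C w X"
proof (induction "card (supp V w)" arbitrary: C w rule: less_induct)
  case less
  show ?case
  proof (cases "is_cover V E C (V - supp V w)")
    case True then show ?thesis using proc_out.stop by blast
  next
    case False
    obtain x1 x2 y1 y2 where vc: "valid_choice V E C w x1 x2 y1 y2" using part1[OF less.prems False] by blast
    define w' where "w' = new_weight w x1 x2 y1 y2"
    define C' where "C' = restrict_col C (supp V w')"
    have ps: "supp V w' \<subset> supp V w" unfolding w'_def by (rule supp_decr[OF vc])
    have fin: "finite V" using less.prems(1) unfolding is_tree_def by simp
    have lt: "card (supp V w') < card (supp V w)"
    proof -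
      have "finite (supp V w)" using fin unfolding supp_def by simp
      then show ?thesis using ps by (rule psubset_card_mono)
    qed
    have dom': "\<forall>v. C' v \<noteq> None \<longleftrightarrow> v \<in> supp V w'"
    proof
      fix v show "C' v \<noteq> None \<longleftrightarrow> v \<in> supp V w'"
      proof (cases "v \<in> supp V w'")
        case True then have "v \<in> supp V w" using ps by blast
        then show ?thesis using True less.prems(2) unfolding C'_def restrict_col_def by simp
      next
        case False then show ?thesis unfolding C'_def restrict_col_def by simp
      qed
    qed
    obtain X where "proc_out V E C' w' X" using less.hyps[OF lt less.prems(1) dom'] by blast
    moreover have "proc_step V E (C, w) (C', w')"
      unfolding proc_step_simp using False vc w'_def C'_def by blast
    ultimately show ?thesis using proc_out.rec by blast
  qed
qed



lemma cover_V: "is_tree V E \<Longrightarrow> is_cover V E C V"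
  unfolding is_cover_def convex_def
proof (intro conjI exI[of _ "\<lambda>_. undefined"] allI ballI impI)
  assume T: "is_tree V E"
  fix c
  show "connected_in E {v\<in>V. undefined = c}"
  proof (cases "undefined = c")
    case True then show ?thesis using T unfolding is_tree_def by simp
  next
    case False then show ?thesis by (simp add: connected_in_def)
  qed
next
  fix v c assume "v \<in> V" "restrict_col C ({v. C v \<noteq> None} - V) v = Some c"
  then show "undefined = c" unfolding restrict_col_def by simp
qed simp

lemma covers_fin: "finite V \<Longrightarrow> finite {sum w X | X. is_cover V E C X}"
proof -
  assume fV: "finite V"
  have "{sum w X | X. is_cover V E C X} = sum w ` {X. is_cover V E C X}" by (simp add: image_Collect)
  moreover have "{X. is_cover V E C X} \<subseteq> Pow V" unfolding is_cover_def by blast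
  then have "finite {X. is_cover V E C X}" using fV by (simp add: finite_subset)
  ultimately show ?thesis by simp
qed

lemma OPT_le: "is_tree V E \<Longrightarrow> is_cover V E C X \<Longrightarrow> OPT V E C w \<le> sum w X"
proof -
  assume T: "is_tree V E" and c: "is_cover V E C X"
  have fin: "finite V" using T unfolding is_tree_def by simp
  show ?thesis unfolding OPT_def by (rule Min_le[OF covers_fin[OF fin]]) (use c in blast)
qed

lemma OPT_in: "is_tree V E \<Longrightarrow> \<exists>X. is_cover V E C X \<and> OPT V E C w = sum w X"
proof -
  assume T: "is_tree V E"
  have fin: "finite V" using T unfolding is_tree_def by simp
  have "finite {sum w X | X. is_cover V E C X}" by (rule covers_fin[OF fin])
  moreover have "{sum w X | X. is_cover V E C X} \<noteq> {}" using cover_V[OF T] by blast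
  ultimately have "OPT V E C w \<in> {sum w X | X. is_cover V E C X}" unfolding OPT_def by (rule Min_in)
  then show ?thesis by blast
qed

lemma convex_mono: "convex V E C \<Longrightarrow> (\<forall>v c. C' v = Some c \<longrightarrow> C v = Some c) \<Longrightarrow> convex V E C'"
  unfolding convex_def by blast

lemma cover_hits:
  assumes cov: "is_cover V E C X" and vc: "valid_choice V E C w x1 x2 y1 y2"
    and dom: "\<forall>v. C v \<noteq> None \<longleftrightarrow> v \<in> supp V w"
  shows "X \<inter> {x1, x2, y1, y2} \<noteq> {}"
proof
  assume dis: "X \<inter> {x1, x2, y1, y2} = {}"
  let ?R = "restrict_col C ({v. C v \<noteq> None} - X)"
  obtain f where f1: "\<forall>v\<in>V. \<forall>c. ?R v = Some c \<longrightarrow> f v = c" and f2: "\<forall>c. connected_in E {v\<in>V. f v = c}"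
    using cov unfolding is_cover_def convex_def by blast
  have S: "{x1, x2, y1, y2} \<subseteq> supp V w" and eq: "C x1 = C x2" "C y1 = C y2" "C x1 \<noteq> C y1"
    and car: "carrier V E {x1, x2} \<inter> carrier V E {y1, y2} \<noteq> {}"
    using vc unfolding valid_choice_def by auto
  have SV: "{x1, x2, y1, y2} \<subseteq> V" using S unfolding supp_def by auto
  have "C x1 \<noteq> None" "C y1 \<noteq> None" using S dom by blast+
  then obtain a b where a: "C x1 = Some a" and b: "C y1 = Some b" by auto
  have ab: "a \<noteq> b" using a b eq by auto
  have R: "\<And>z. z \<in> {x1, x2, y1, y2} \<Longrightarrow> ?R z = C z"
    using dis S dom unfolding restrict_col_def by auto
  have fa: "f x1 = a" "f x2 = a" using f1 R a eq SV by auto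
  have fb: "f y1 = b" "f y2 = b" using f1 R b eq SV by auto
  have "carrier V E {x1, x2} \<subseteq> {v\<in>V. f v = a}" using fa SV f2 by (intro carrier_sub) auto
  moreover have "carrier V E {y1, y2} \<subseteq> {v\<in>V. f v = b}" using fb SV f2 by (intro carrier_sub) auto
  ultimately show False using car ab by blast
qed

lemma sum_decomp:
  assumes "finite X" "\<forall>v. w v = w' v + (if v \<in> S then e else 0)"
  shows "sum w X = sum w' X + real (card (X \<inter> S)) * e"
proof -
  have "sum w X = sum w' X + (\<Sum>v\<in>X. if v \<in> S then e else 0)"
    using assms(2) by (simp add: sum.distrib[symmetric])
  also have "(\<Sum>v\<in>X. if v \<in> S then e else 0) = (\<Sum>v\<in>{v\<in>X. v \<in> S}. e)"
    using sum.inter_filter[OF assms(1), of "\<lambda>_. e" "\<lambda>v. v \<in> S"] by simp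
  also have "{v\<in>X. v \<in> S} = X \<inter> S" by auto
  finally show ?thesis by simp
qed

lemma card4: "card {x1, x2, y1, y2} \<le> 4"
proof -
  have "card (set [x1, x2, y1, y2]) \<le> length [x1, x2, y1, y2]" by (rule card_length)
  then show ?thesis by simp
qed



lemma rc_none: "v \<notin> A \<Longrightarrow> restrict_col C A v = None"
  by (simp add: restrict_col_def)

lemma out_good:
  assumes "proc_out V E C w X" and T: "is_tree V E"
  shows "(\<forall>v\<in>V. 0 \<le> w v) \<longrightarrow> (\<forall>v. C v \<noteq> None \<longleftrightarrow> v \<in> supp V w) \<longrightarrow>
    is_cover V E C X \<and> sum w X \<le> 4 * OPT V E C w \<and> V - supp V w \<subseteq> X"
  using assms(1)
proof (induction rule: proc_out.induct)
  case (stop C w)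
  show ?case
  proof (intro impI)
    assume nn: "\<forall>v\<in>V. 0 \<le> w v" and dom: "\<forall>v. C v \<noteq> None \<longleftrightarrow> v \<in> supp V w"
    have z: "\<forall>v \<in> V - supp V w. w v = 0" using nn unfolding supp_def by force
    have s0: "sum w (V - supp V w) = 0" using z by simp
    obtain X0 where X0: "is_cover V E C X0" "OPT V E C w = sum w X0" using OPT_in[OF T] by blast
    have "X0 \<subseteq> V" using X0(1) unfolding is_cover_def by simp
    then have "0 \<le> sum w X0" using nn by (intro sum_nonneg) auto
    then show "is_cover V E C (V - supp V w) \<and> sum w (V - supp V w) \<le> 4 * OPT V E C w \<and> V - supp V w \<subseteq> V - supp V w"
      using stop.hyps s0 X0(2) by simp
  qed
next
  case (rec C w C' w' X)
  show ?case
  proof (intro impI)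
    assume nn: "\<forall>v\<in>V. 0 \<le> w v" and dom: "\<forall>v. C v \<noteq> None \<longleftrightarrow> v \<in> supp V w"
    obtain x1 x2 y1 y2 where vc: "valid_choice V E C w x1 x2 y1 y2"
      and w'd: "w' = new_weight w x1 x2 y1 y2" and C'd: "C' = restrict_col C (supp V w')"
      using rec.hyps(1) unfolding proc_step_simp by blast
    obtain \<epsilon> where e: "\<epsilon> > 0"
      "new_weight w x1 x2 y1 y2 = (\<lambda>v. if v \<in> {x1, x2, y1, y2} then w v - \<epsilon> else w v)"
      "\<forall>v\<in>{x1, x2, y1, y2}. \<epsilon> \<le> w v"
      using step_facts[OF vc] by blast
    let ?S = "{x1, x2, y1, y2}"
    have w'e: "w' = (\<lambda>v. if v \<in> ?S then w v - \<epsilon> else w v)" using w'd e(2) by simp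
    have decomp: "\<forall>v. w v = w' v + (if v \<in> ?S then \<epsilon> else 0)" unfolding w'e by simp
    have nn': "\<forall>v\<in>V. 0 \<le> w' v" unfolding w'e using nn e(3) by auto
    have ps: "supp V w' \<subset> supp V w" unfolding w'd by (rule supp_decr[OF vc])
    have dom': "\<forall>v. C' v \<noteq> None \<longleftrightarrow> v \<in> supp V w'"
    proof
      fix v show "C' v \<noteq> None \<longleftrightarrow> v \<in> supp V w'"
      proof (cases "v \<in> supp V w'")
        case True then have "v \<in> supp V w" using ps by blast
        then show ?thesis using True dom unfolding C'd restrict_col_def by simp
      next
        case False then show ?thesis unfolding C'd restrict_col_def by simp
      qed
    qed
    have IH: "is_cover V E C' X \<and> sum w' X \<le> 4 * OPT V E C' w' \<and> V - supp V w' \<subseteq> X"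
      using rec.IH nn' dom' by blast
    then have cov': "is_cover V E C' X" and b': "sum w' X \<le> 4 * OPT V E C' w'" and sub': "V - supp V w' \<subseteq> X"
      by auto
    have sub: "V - supp V w \<subseteq> X" using sub' ps by blast
    have XV: "X \<subseteq> V" using cov' unfolding is_cover_def by simp
    have fV: "finite V" using T unfolding is_tree_def by simp
    have fX: "finite X" using XV fV finite_subset by blast
    have req: "restrict_col C ({v. C v \<noteq> None} - X) = restrict_col C' ({v. C' v \<noteq> None} - X)"
    proof
      fix v
      show "restrict_col C ({v. C v \<noteq> None} - X) v = restrict_col C' ({v. C' v \<noteq> None} - X) v"
      proof (cases "v \<in> supp V w' \<and> v \<notin> X")
        case True
        then have "v \<in> supp V w" using ps by blast
        then show ?thesis using True dom dom' unfolding restrict_col_def C'd by simp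
      next
        case False
        have "v \<notin> {v. C v \<noteq> None} - X"
        proof
          assume "v \<in> {v. C v \<noteq> None} - X"
          then have "v \<in> supp V w" "v \<notin> X" using dom by auto
          then have "v \<in> supp V w'" using sub' unfolding supp_def by auto
          then show False using False \<open>v \<notin> X\<close> by blast
        qed
        moreover have "v \<notin> {v. C' v \<noteq> None} - X" using False dom' by auto
        ultimately show ?thesis by (metis rc_none)
      qed
    qed
    have cov: "is_cover V E C X" using cov' XV req unfolding is_cover_def by simp
    obtain X0 where X0: "is_cover V E C X0" "OPT V E C w = sum w X0" using OPT_in[OF T] by blast
    have X0V: "X0 \<subseteq> V" using X0(1) unfolding is_cover_def by simp
    have fX0: "finite X0" using X0V fV finite_subset by blast
    have hit: "X0 \<inter> ?S \<noteq> {}" using cover_hits[OF X0(1) vc dom] .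
    have k1: "card (X0 \<inter> ?S) \<ge> 1" using hit fX0 by (simp add: Suc_le_eq card_gt_0_iff)
    have cov0': "is_cover V E C' X0"
      unfolding is_cover_def
    proof
      show "X0 \<subseteq> V" by fact
      show "convex V E (restrict_col C' ({v. C' v \<noteq> None} - X0))"
      proof (rule convex_mono)
        show "convex V E (restrict_col C ({v. C v \<noteq> None} - X0))" using X0(1) unfolding is_cover_def by simp
        show "\<forall>v c. restrict_col C' ({v. C' v \<noteq> None} - X0) v = Some c \<longrightarrow> restrict_col C ({v. C v \<noteq> None} - X0) v = Some c"
          unfolding restrict_col_def C'd by auto
      qed
    qed
    have o': "OPT V E C' w' \<le> sum w' X0" using OPT_le[OF T cov0'] .
    have s0: "sum w X0 = sum w' X0 + real (card (X0 \<inter> ?S)) * \<epsilon>" using sum_decomp[OF fX0 decomp] .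
    have sX: "sum w X = sum w' X + real (card (X \<inter> ?S)) * \<epsilon>" using sum_decomp[OF fX decomp] .
    have "card (X \<inter> ?S) \<le> card ?S" by (rule card_mono) auto
    then have c4: "card (X \<inter> ?S) \<le> 4" using card4[of x1 x2 y1 y2] by linarith
    have m1: "real (card (X \<inter> ?S)) * \<epsilon> \<le> 4 * \<epsilon>" using c4 e(1) by (intro mult_right_mono) auto
    have m2: "1 * \<epsilon> \<le> real (card (X0 \<inter> ?S)) * \<epsilon>" using k1 e(1) by (intro mult_right_mono) auto
    have bound: "sum w X \<le> 4 * OPT V E C w" using sX s0 X0(2) m1 m2 b' o' by linarith
    show "is_cover V E C X \<and> sum w X \<le> 4 * OPT V E C w \<and> V - supp V w \<subseteq> X" using cov sub bound by simp
  qed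
qed

theorem mainTheorem6:
  fixes V :: "'v set" and E :: "'v set set" and C :: "'v \<Rightarrow> 'c option" and w :: "'v \<Rightarrow> real"
  assumes "is_tree V E"
    and "\<forall>v\<in>V. w v \<ge> 0"
    and "\<forall>v. C v \<noteq> None \<longleftrightarrow> v \<in> supp V w"
  shows "(\<not> is_cover V E C (V - supp V w) \<longrightarrow> (\<exists>x1 x2 y1 y2. valid_choice V E C w x1 x2 y1 y2))
    \<and> \<not> (\<exists>f. f 0 = (C, w) \<and> (\<forall>n. proc_step V E (f n) (f (Suc n))))
    \<and> (\<exists>X. proc_out V E C w X)
    \<and> (\<forall>X. proc_out V E C w X \<longrightarrow> is_cover V E C X \<and> sum w X \<le> 4 * OPT V E C w)"
proof -
  have fV: "finite V" using assms(1) unfolding is_tree_def by simp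
  show ?thesis
  proof (intro conjI)
    show "\<not> is_cover V E C (V - supp V w) \<longrightarrow> (\<exists>x1 x2 y1 y2. valid_choice V E C w x1 x2 y1 y2)"
      using part1[OF assms(1) assms(3)] by blast
    show "\<not> (\<exists>f. f 0 = (C, w) \<and> (\<forall>n. proc_step V E (f n) (f (Suc n))))" by (rule no_inf[OF fV])
    show "\<exists>X. proc_out V E C w X" by (rule exists_out[OF assms(1) assms(3)])
    show "\<forall>X. proc_out V E C w X \<longrightarrow> is_cover V E C X \<and> sum w X \<le> 4 * OPT V E C w"
    proof (intro allI impI)
      fix X assume "proc_out V E C w X"
      then show "is_cover V E C X \<and> sum w X \<le> 4 * OPT V E C w"
        using out_good[of V E C w X] assms by blast
    qed
  qed
qed

end
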